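(* Let $V$ be the finite vertex set of a directed acyclic graph with positive weights $(d_v)_{v\in V}$, let $\alpha\in\mathbb{R}^n$ and let $K_w\in\mathbb{R}^{n\times n}$, $w\in V$, be positive semidefinite matrices. Let $L=\{\kappa\in\mathbb{R}^{V\times V}:\forall w\in V,\ \sum_{v\in{\rm A}(w)}\kappa_{vw}=1\}$. Then the optimization problems $$\min_{\kappa\in L}\ \max_{v\in V}\ d_v^{-2}\sum_{w\in{\rm D}(v)}\kappa_{vw}^2\,\alpha^\top K_w\alpha \qquad\text{and}\qquad \max_{\eta\in H}\ \sum_{w\in V}\zeta_w(\eta)\,\alpha^\top K_w\alpha$$ are dual to each other and there is no duality gap, i.e. their optimal values are equal.
   Context: ${\rm A}(w)$ and ${\rm D}(w)$ are the sets of ancestors and descendants of $w$ in the DAG, each including $w$ itself. $H=\{\eta\in\mathbb{R}^V:\eta\ge0,\ \sum_{v\in V}d_v^2\eta_v\le1\}$, and for $\eta\in H$, $\zeta_w(\eta)$ is defined by $\zeta_w(\eta)^{-1}=\sum_{v\in{\rm A}(w)}\eta_v^{-1}$, with the convention $\zeta_w(\eta)=0$ if $\eta_v=0$ for some $v\in{\rm A}(w)$. *)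

theory Defs
  imports "HOL-Analysis.Analysis"
begin

definition ancestors :: "'v set \<Rightarrow> ('v \<times> 'v) set \<Rightarrow> 'v \<Rightarrow> 'v set" where
  "ancestors V E w = {v \<in> V. (v, w) \<in> E\<^sup>*}"

definition descendants :: "'v set \<Rightarrow> ('v \<times> 'v) set \<Rightarrow> 'v \<Rightarrow> 'v set" where
  "descendants V E v = {w \<in> V. (v, w) \<in> E\<^sup>*}"

definition psd :: "real^'n^'n \<Rightarrow> bool" where
  "psd K \<longleftrightarrow> transpose K = K \<and> (\<forall>x. 0 \<le> x \<bullet> (K *v x))"

definition Lset :: "'v set \<Rightarrow> ('v \<times> 'v) set \<Rightarrow> ('v \<Rightarrow> 'v \<Rightarrow> real) set" where
  "Lset V E = {\<kappa>. (\<forall>v w. (v \<notin> V \<or> w \<notin> V) \<longrightarrow> \<kappa> v w = 0) \<and>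
                   (\<forall>w\<in>V. (\<Sum>v\<in>ancestors V E w. \<kappa> v w) = 1)}"

definition Hset :: "'v set \<Rightarrow> ('v \<Rightarrow> real) \<Rightarrow> ('v \<Rightarrow> real) set" where
  "Hset V d = {\<eta>. (\<forall>v. v \<notin> V \<longrightarrow> \<eta> v = 0) \<and> (\<forall>v\<in>V. 0 \<le> \<eta> v) \<and>
                  (\<Sum>v\<in>V. (d v)\<^sup>2 * \<eta> v) \<le> 1}"

definition zeta :: "'v set \<Rightarrow> ('v \<times> 'v) set \<Rightarrow> ('v \<Rightarrow> real) \<Rightarrow> 'v \<Rightarrow> real" where
  "zeta V E \<eta> w = (if \<exists>v\<in>ancestors V E w. \<eta> v = 0 then 0
                    else 1 / (\<Sum>v\<in>ancestors V E w. 1 / \<eta> v))"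

definition primal_obj :: "'v set \<Rightarrow> ('v \<times> 'v) set \<Rightarrow> ('v \<Rightarrow> real) \<Rightarrow> real^'n
    \<Rightarrow> ('v \<Rightarrow> real^'n^'n) \<Rightarrow> ('v \<Rightarrow> 'v \<Rightarrow> real) \<Rightarrow> real" where
  "primal_obj V E d \<alpha> K \<kappa> =
     Max ((\<lambda>v. 1 / (d v)\<^sup>2 * (\<Sum>w\<in>descendants V E v. (\<kappa> v w)\<^sup>2 * (\<alpha> \<bullet> (K w *v \<alpha>)))) ` V)"

definition dual_obj :: "'v set \<Rightarrow> ('v \<times> 'v) set \<Rightarrow> real^'n
    \<Rightarrow> ('v \<Rightarrow> real^'n^'n) \<Rightarrow> ('v \<Rightarrow> real) \<Rightarrow> real" where
  "dual_obj V E \<alpha> K \<eta> = (\<Sum>w\<in>V. zeta V E \<eta> w * (\<alpha> \<bullet> (K w *v \<alpha>)))"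

end

theory Submission
  imports Defs
begin

definition gg :: "'v set \<Rightarrow> ('v \<times> 'v) set \<Rightarrow> ('v \<Rightarrow> real) \<Rightarrow> ('v \<Rightarrow> real) \<Rightarrow> ('v \<Rightarrow> 'v \<Rightarrow> real) \<Rightarrow> 'v \<Rightarrow> real" where
  "gg V E d c \<kappa> v = 1 / (d v)\<^sup>2 * (\<Sum>w\<in>descendants V E v. (\<kappa> v w)\<^sup>2 * c w)"

definition dualc :: "'v set \<Rightarrow> ('v \<times> 'v) set \<Rightarrow> ('v \<Rightarrow> real) \<Rightarrow> ('v \<Rightarrow> real) \<Rightarrow> real" where
  "dualc V E c \<eta> = (\<Sum>w\<in>V. zeta V E \<eta> w * c w)"

definition lin :: "'v set \<Rightarrow> ('v \<times> 'v) set \<Rightarrow> ('v \<Rightarrow> real) \<Rightarrow> ('v \<Rightarrow> real) \<Rightarrow> ('v \<Rightarrow> 'v \<Rightarrow> real) \<Rightarrow> ('v \<Rightarrow> real) \<Rightarrow> real" where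
  "lin V E d c \<kappa> \<eta> = (\<Sum>v\<in>V. \<eta> v * (d v)\<^sup>2 * gg V E d c \<kappa> v)"

lemma anc_desc: "v \<in> V \<Longrightarrow> w \<in> V \<Longrightarrow> v \<in> ancestors V E w \<longleftrightarrow> w \<in> descendants V E v"
  by (simp add: ancestors_def descendants_def)

lemma self_anc: "w \<in> V \<Longrightarrow> w \<in> ancestors V E w"
  by (simp add: ancestors_def)

lemma anc_sub: "ancestors V E w \<subseteq> V" and desc_sub: "descendants V E w \<subseteq> V"
  by (auto simp: ancestors_def descendants_def)

lemma fin_anc: "finite V \<Longrightarrow> finite (ancestors V E w)"
  using anc_sub finite_subset by metis

lemma fin_desc: "finite V \<Longrightarrow> finite (descendants V E w)"
  using desc_sub finite_subset by metis

lemma lin_swap: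
  assumes "finite V" "\<forall>v\<in>V. 0 < d v"
  shows "lin V E d c \<kappa> \<eta> = (\<Sum>w\<in>V. c w * (\<Sum>v\<in>ancestors V E w. \<eta> v * (\<kappa> v w)\<^sup>2))"
proof -
  have "lin V E d c \<kappa> \<eta> = (\<Sum>v\<in>V. \<Sum>w\<in>descendants V E v. \<eta> v * (\<kappa> v w)\<^sup>2 * c w)"
    unfolding lin_def gg_def using assms(2)
    by (intro sum.cong refl) (auto simp: sum_distrib_left field_simps)
  also have "\<dots> = (\<Sum>v\<in>V. \<Sum>w\<in>{w. w \<in> V \<and> (v, w) \<in> E\<^sup>*}. \<eta> v * (\<kappa> v w)\<^sup>2 * c w)"
    by (simp add: descendants_def)
  also have "\<dots> = (\<Sum>w\<in>V. \<Sum>v\<in>{v. v \<in> V \<and> (v, w) \<in> E\<^sup>*}. \<eta> v * (\<kappa> v w)\<^sup>2 * c w)"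
    by (rule sum.swap_restrict[OF assms(1) assms(1)])
  also have "\<dots> = (\<Sum>w\<in>V. c w * (\<Sum>v\<in>ancestors V E w. \<eta> v * (\<kappa> v w)\<^sup>2))"
    by (simp add: ancestors_def sum_distrib_left mult.commute mult.left_commute)
  finally show ?thesis .
qed

lemma zeta_nonneg:
  assumes "finite V" "\<forall>v\<in>V. 0 \<le> \<eta> v"
  shows "0 \<le> zeta V E \<eta> w"
  using assms anc_sub[of V E w]
  by (auto simp: zeta_def intro!: sum_nonneg)

lemma zeta_le:
  assumes "finite V" "\<forall>v\<in>V. 0 \<le> \<eta> v" and s: "(\<Sum>v\<in>ancestors V E w. k v) = 1"
  shows "zeta V E \<eta> w \<le> (\<Sum>v\<in>ancestors V E w. \<eta> v * (k v)\<^sup>2)"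
proof (cases "\<exists>v\<in>ancestors V E w. \<eta> v = 0")
  case True
  then show ?thesis using assms anc_sub[of V E w]
    by (auto simp: zeta_def intro!: sum_nonneg)
next
  case False
  let ?A = "ancestors V E w"
  have fin: "finite ?A" by (rule fin_anc[OF assms(1)])
  have pos: "\<forall>v\<in>?A. 0 < \<eta> v"
  proof
    fix v assume v: "v \<in> ?A"
    have "v \<in> V" using anc_sub[of V E w] v by (rule subsetD)
    then have "0 \<le> \<eta> v" using assms(2) by simp
    moreover have "\<eta> v \<noteq> 0" using False v by auto
    ultimately show "0 < \<eta> v" by simp
  qed
  have ne: "?A \<noteq> {}" using s by auto
  define S where "S = (\<Sum>v\<in>?A. 1 / \<eta> v)"
  have Spos: "0 < S" unfolding S_def using pos ne fin by (intro sum_pos) auto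
  define z where "z = 1 / S"
  have zeta: "zeta V E \<eta> w = z" using False by (simp add: zeta_def z_def S_def)
  have "0 \<le> (\<Sum>v\<in>?A. \<eta> v * (k v - z / \<eta> v)\<^sup>2)"
    using pos by (intro sum_nonneg) auto
  also have "\<dots> = (\<Sum>v\<in>?A. \<eta> v * (k v)\<^sup>2 - 2 * z * k v + z\<^sup>2 * (1 / \<eta> v))"
    using pos by (intro sum.cong refl) (auto simp: field_simps power2_eq_square)
  also have "\<dots> = (\<Sum>v\<in>?A. \<eta> v * (k v)\<^sup>2) - (\<Sum>v\<in>?A. 2 * z * k v) + (\<Sum>v\<in>?A. z\<^sup>2 * (1 / \<eta> v))"
    by (simp only: sum.distrib sum_subtractf)
  finally have A: "0 \<le> (\<Sum>v\<in>?A. \<eta> v * (k v)\<^sup>2) - (\<Sum>v\<in>?A. 2 * z * k v) + (\<Sum>v\<in>?A. z\<^sup>2 * (1 / \<eta> v))" .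
  have B: "(\<Sum>v\<in>?A. 2 * z * k v) = 2 * z" by (simp only: sum_distrib_left[symmetric] s mult_1_right)
  have C: "(\<Sum>v\<in>?A. z\<^sup>2 * (1 / \<eta> v)) = z\<^sup>2 * S" unfolding S_def by (simp only: sum_distrib_left)
  have D: "z\<^sup>2 * S = z" using Spos by (simp add: z_def power2_eq_square)
  show ?thesis using A B C D zeta by linarith
qed

lemma weak_core:
  assumes "finite V" "\<forall>v\<in>V. 0 < d v" "\<forall>w\<in>V. 0 \<le> c w"
    and k: "\<kappa> \<in> Lset V E" and h: "\<eta> \<in> Hset V d"
  shows "dualc V E c \<eta> \<le> lin V E d c \<kappa> \<eta>"
proof -
  have eta: "\<forall>v\<in>V. 0 \<le> \<eta> v" using h by (simp add: Hset_def)
  have "dualc V E c \<eta> \<le> (\<Sum>w\<in>V. c w * (\<Sum>v\<in>ancestors V E w. \<eta> v * (\<kappa> v w)\<^sup>2))"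
    unfolding dualc_def
  proof (intro sum_mono)
    fix w assume w: "w \<in> V"
    have "zeta V E \<eta> w \<le> (\<Sum>v\<in>ancestors V E w. \<eta> v * (\<kappa> v w)\<^sup>2)"
      using zeta_le[OF assms(1) eta, where E=E and w=w and k="\<lambda>v. \<kappa> v w"] k w by (auto simp: Lset_def)
    then show "zeta V E \<eta> w * c w \<le> c w * (\<Sum>v\<in>ancestors V E w. \<eta> v * (\<kappa> v w)\<^sup>2)"
      using assms(3) w by (simp add: mult.commute mult_left_mono)
  qed
  then show ?thesis using lin_swap[OF assms(1,2)] by simp
qed

lemma gg_nonneg: "\<forall>w\<in>V. 0 \<le> c w \<Longrightarrow> 0 \<le> gg V E d c \<kappa> v"
  unfolding gg_def by (intro mult_nonneg_nonneg sum_nonneg) (use desc_sub[of V E v] in auto)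

lemma lin_le_max:
  assumes "finite V" "V \<noteq> {}" "\<forall>w\<in>V. 0 \<le> c w" and h: "\<eta> \<in> Hset V d"
  shows "lin V E d c \<kappa> \<eta> \<le> Max (gg V E d c \<kappa> ` V)"
proof -
  let ?M = "Max (gg V E d c \<kappa> ` V)"
  have M0: "0 \<le> ?M" using assms gg_nonneg[OF assms(3)]
    by (meson Max_ge all_not_in_conv finite_imageI image_eqI order_trans)
  have "lin V E d c \<kappa> \<eta> \<le> (\<Sum>v\<in>V. \<eta> v * (d v)\<^sup>2 * ?M)"
    unfolding lin_def using h assms by (intro sum_mono mult_left_mono) (auto simp: Hset_def)
  also have "\<dots> = ?M * (\<Sum>v\<in>V. (d v)\<^sup>2 * \<eta> v)"
    by (simp add: sum_distrib_left mult.commute mult.left_commute)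
  also have "\<dots> \<le> ?M * 1" using h M0 by (intro mult_left_mono) (auto simp: Hset_def)
  finally show ?thesis by simp
qed

lemma explicit:
  assumes "finite V" "\<forall>v\<in>V. 0 < d v" and h: "\<eta> \<in> Hset V d"
  shows "\<exists>\<kappa>\<in>Lset V E. lin V E d c \<kappa> \<eta> = dualc V E c \<eta>"
proof -
  have eta: "\<forall>v\<in>V. 0 \<le> \<eta> v" using h by (simp add: Hset_def)
  define z where "z w = (SOME v. v \<in> ancestors V E w \<and> \<eta> v = 0)" for w
  define \<kappa> where "\<kappa> v w = (if v \<in> V \<and> w \<in> V then
      (if \<exists>u\<in>ancestors V E w. \<eta> u = 0 then (if v = z w then 1 else 0)
       else zeta V E \<eta> w / \<eta> v) else 0)" for v w
  have col: "(\<Sum>v\<in>ancestors V E w. \<kappa> v w) = 1 \<and>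
        (\<Sum>v\<in>ancestors V E w. \<eta> v * (\<kappa> v w)\<^sup>2) = zeta V E \<eta> w" if w: "w \<in> V" for w
  proof (cases "\<exists>u\<in>ancestors V E w. \<eta> u = 0")
    case True
    then have zz: "z w \<in> ancestors V E w \<and> \<eta> (z w) = 0"
      unfolding z_def using someI_ex[of "\<lambda>v. v \<in> ancestors V E w \<and> \<eta> v = 0"] True by blast
    have "(\<Sum>v\<in>ancestors V E w. \<kappa> v w) = (\<Sum>v\<in>ancestors V E w. if v = z w then 1 else 0)"
      using anc_sub[of V E w] w True by (intro sum.cong refl) (auto simp: \<kappa>_def)
    also have "\<dots> = 1" using zz fin_anc[OF assms(1)] by (simp add: sum.delta)
    finally have 1: "(\<Sum>v\<in>ancestors V E w. \<kappa> v w) = 1" .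
    have "(\<Sum>v\<in>ancestors V E w. \<eta> v * (\<kappa> v w)\<^sup>2) = (\<Sum>v\<in>ancestors V E w. 0)"
      using anc_sub[of V E w] w True zz by (intro sum.cong refl) (auto simp: \<kappa>_def)
    then show ?thesis using 1 True by (simp add: zeta_def)
  next
    case False
    let ?A = "ancestors V E w"
    have fin: "finite ?A" by (rule fin_anc[OF assms(1)])
    have pos: "\<forall>v\<in>?A. 0 < \<eta> v"
    proof
      fix v assume v: "v \<in> ?A"
      have "v \<in> V" using anc_sub[of V E w] v by (rule subsetD)
      then have "0 \<le> \<eta> v" using eta by simp
      moreover have "\<eta> v \<noteq> 0" using False v by auto
      ultimately show "0 < \<eta> v" by simp
    qed
    have ne: "?A \<noteq> {}" using self_anc[OF w] by auto
    define S where "S = (\<Sum>v\<in>?A. 1 / \<eta> v)"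
    have Spos: "0 < S" unfolding S_def using pos ne fin by (intro sum_pos) auto
    have zeta: "zeta V E \<eta> w = 1 / S" using False by (simp add: zeta_def S_def)
    have "(\<Sum>v\<in>?A. \<kappa> v w) = (\<Sum>v\<in>?A. (1/S) * (1 / \<eta> v))"
      using anc_sub[of V E w] w False by (intro sum.cong refl) (auto simp: \<kappa>_def zeta)
    also have "\<dots> = (1/S) * S" unfolding S_def by (simp only: sum_distrib_left)
    also have "\<dots> = 1" using Spos by simp
    finally have 1: "(\<Sum>v\<in>?A. \<kappa> v w) = 1" .
    have "(\<Sum>v\<in>?A. \<eta> v * (\<kappa> v w)\<^sup>2) = (\<Sum>v\<in>?A. (1/S)^2 * (1 / \<eta> v))"
      using anc_sub[of V E w] w False pos
      by (intro sum.cong refl) (auto simp: \<kappa>_def zeta power2_eq_square field_simps)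
    also have "\<dots> = (1/S)^2 * S" unfolding S_def by (simp only: sum_distrib_left)
    also have "\<dots> = 1 / S" using Spos by (simp add: power2_eq_square)
    finally show ?thesis using 1 zeta by simp
  qed
  have "\<kappa> \<in> Lset V E" using col by (auto simp: Lset_def \<kappa>_def)
  moreover have "lin V E d c \<kappa> \<eta> = dualc V E c \<eta>"
    unfolding lin_swap[OF assms(1,2)] dualc_def using col by (simp add: mult.commute)
  ultimately show ?thesis by blast
qed

lemma BW_finite:
  fixes X :: "nat \<Rightarrow> 'i \<Rightarrow> real"
  assumes "finite I" and "\<And>n i. i \<in> I \<Longrightarrow> \<bar>X n i\<bar> \<le> B"
  shows "\<exists>r. strict_mono r \<and> (\<forall>i\<in>I. convergent (\<lambda>n. X (r n) i))"
  using assms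
proof (induction I rule: finite_induct)
  case empty
  then show ?case by (intro exI[of _ id] conjI) (auto simp: strict_mono_def)
next
  case (insert a I)
  have "\<exists>r. strict_mono r \<and> (\<forall>i\<in>I. convergent (\<lambda>n. X (r n) i))"
    by (rule insert.IH) (use insert.prems in auto)
  then obtain r where r: "strict_mono r" "\<forall>i\<in>I. convergent (\<lambda>n. X (r n) i)" by auto
  obtain s where s: "strict_mono s" "monoseq (\<lambda>n. X (r (s n)) a)"
    using seq_monosub[of "\<lambda>n. X (r n) a"] by (auto simp: o_def)
  have "Bseq (\<lambda>n. X (r (s n)) a)"
    by (rule BseqI'[where K=B]) (simp add: insert.prems)
  then have ca: "convergent (\<lambda>n. X (r (s n)) a)"
    by (rule Bseq_monoseq_convergent[OF _ s(2)])
  have "convergent (\<lambda>n. X (r (s n)) i)" if "i \<in> I" for i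
  proof -
    from r(2) that obtain l where "(\<lambda>n. X (r n) i) \<longlonglongrightarrow> l" by (auto simp: convergent_def)
    from LIMSEQ_subseq_LIMSEQ[OF this s(1)] show ?thesis by (auto simp: convergent_def o_def)
  qed
  then have "\<forall>i\<in>insert a I. convergent (\<lambda>n. X ((r \<circ> s) n) i)" using ca by (auto simp: o_def)
  moreover have "strict_mono (r \<circ> s)" by (rule strict_mono_o[OF r(1) s(1)])
  ultimately show ?case by (intro exI[of _ "r \<circ> s"] conjI)
qed

lemma L_nonempty:
  assumes "finite V"
  shows "(\<lambda>v w. if v \<in> V \<and> w \<in> V \<and> v = w then 1 else 0) \<in> Lset V E"
proof -
  have "(\<Sum>v\<in>ancestors V E w. if v \<in> V \<and> w \<in> V \<and> v = w then 1 else (0::real)) = 1" if "w \<in> V" for w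
  proof -
    have "(\<Sum>v\<in>ancestors V E w. if v \<in> V \<and> w \<in> V \<and> v = w then 1 else (0::real))
        = (\<Sum>v\<in>ancestors V E w. if v = w then 1 else 0)"
      using that by (intro sum.cong refl) auto
    also have "\<dots> = 1" using self_anc[OF that] fin_anc[OF assms] by (simp add: sum.delta')
    finally show ?thesis .
  qed
  then show ?thesis by (auto simp: Lset_def)
qed

lemma normalize:
  assumes "finite V" "\<forall>w\<in>V. 0 \<le> c w" and k: "\<kappa> \<in> Lset V E"
  shows "\<exists>\<kappa>'\<in>Lset V E. (\<forall>v w. \<bar>\<kappa>' v w\<bar> \<le> 1) \<and> (\<forall>v\<in>V. gg V E d c \<kappa>' v \<le> gg V E d c \<kappa> v)"
proof -
  define s where "s w = (\<Sum>u\<in>ancestors V E w. \<bar>\<kappa> u w\<bar>)" for w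
  have s1: "1 \<le> s w" if "w \<in> V" for w
  proof -
    have "1 = \<bar>\<Sum>u\<in>ancestors V E w. \<kappa> u w\<bar>" using k that by (simp add: Lset_def)
    also have "\<dots> \<le> s w" unfolding s_def by (rule sum_abs)
    finally show ?thesis .
  qed
  have ks: "\<bar>\<kappa> v w\<bar> \<le> s w" if "v \<in> ancestors V E w" for v w
    unfolding s_def using that fin_anc[OF assms(1)]
    by (intro member_le_sum) auto
  define \<kappa>' where "\<kappa>' v w = (if v \<in> V \<and> w \<in> V \<and> v \<in> ancestors V E w then \<bar>\<kappa> v w\<bar> / s w else 0)" for v w
  have b: "\<bar>\<kappa>' v w\<bar> \<le> 1" for v w
    using ks[of v w] s1[of w] by (auto simp: \<kappa>'_def)
  have b2: "\<bar>\<kappa>' v w\<bar> \<le> \<bar>\<kappa> v w\<bar>" for v w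
  proof (cases "v \<in> V \<and> w \<in> V \<and> v \<in> ancestors V E w")
    case True
    then have "1 \<le> s w" using s1 by auto
    then have "\<bar>\<kappa> v w\<bar> / s w \<le> \<bar>\<kappa> v w\<bar>"
      by (simp add: divide_le_eq mult_le_cancel_left1)
    moreover have "\<bar>s w\<bar> = s w" using \<open>1 \<le> s w\<close> by simp
    ultimately show ?thesis using True by (simp add: \<kappa>'_def)
  qed (auto simp: \<kappa>'_def)
  have col: "(\<Sum>v\<in>ancestors V E w. \<kappa>' v w) = 1" if w: "w \<in> V" for w
  proof -
    have "(\<Sum>v\<in>ancestors V E w. \<kappa>' v w) = (\<Sum>v\<in>ancestors V E w. \<bar>\<kappa> v w\<bar> / s w)"
      using w anc_sub[of V E w] by (intro sum.cong refl) (auto simp: \<kappa>'_def)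
    also have "\<dots> = s w / s w" unfolding s_def by (rule sum_divide_distrib[symmetric])
    also have "\<dots> = 1" using s1[OF w] by simp
    finally show ?thesis .
  qed
  have "\<kappa>' \<in> Lset V E" using col by (auto simp: Lset_def \<kappa>'_def)
  moreover have "gg V E d c \<kappa>' v \<le> gg V E d c \<kappa> v" if "v \<in> V" for v
    unfolding gg_def
    using assms(2) desc_sub[of V E v] b2
    by (intro mult_left_mono sum_mono mult_right_mono) (auto simp: abs_le_square_iff[symmetric])
  ultimately show ?thesis using b by blast
qed

lemma exists_min:
  fixes \<Psi> :: "('v \<Rightarrow> real) \<Rightarrow> real"
  assumes fin: "finite V" and "\<forall>v\<in>V. 0 < d v" and c: "\<forall>w\<in>V. 0 \<le> c w"
    and mono: "\<And>x y. (\<forall>v\<in>V. 0 \<le> x v \<and> x v \<le> y v) \<Longrightarrow> \<Psi> x \<le> \<Psi> y"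
    and lsc: "\<And>X x b m. (\<forall>v\<in>V. (\<lambda>n. X n v) \<longlonglongrightarrow> x v) \<Longrightarrow> (\<forall>n. \<Psi> (X n) \<le> b n)
                  \<Longrightarrow> b \<longlonglongrightarrow> m \<Longrightarrow> \<Psi> x \<le> m"
  shows "\<exists>\<kappa>0\<in>Lset V E. \<forall>\<kappa>\<in>Lset V E. \<Psi> (gg V E d c \<kappa>0) \<le> \<Psi> (gg V E d c \<kappa>)"
proof -
  let ?L = "Lset V E"
  let ?S = "(\<lambda>\<kappa>. \<Psi> (gg V E d c \<kappa>)) ` ?L"
  define m where "m = Inf ?S"
  have Sne: "?S \<noteq> {}" using L_nonempty[OF fin] by blast
  have bdd: "bdd_below ?S"
  proof
    fix y assume "y \<in> ?S"
    then obtain \<kappa> where "y = \<Psi> (gg V E d c \<kappa>)" by auto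
    then show "\<Psi> (\<lambda>_. 0) \<le> y" using mono gg_nonneg[OF c] by auto
  qed
  have "\<exists>\<kappa>. \<kappa> \<in> ?L \<and> (\<forall>v w. \<bar>\<kappa> v w\<bar> \<le> 1) \<and> \<Psi> (gg V E d c \<kappa>) < m + inverse (real (Suc n))" for n
  proof -
    have "Inf ?S < m + inverse (real (Suc n))" by (simp add: m_def)
    then obtain y where "y \<in> ?S" "y < m + inverse (real (Suc n))" using cInf_lessD[OF Sne] by blast
    then obtain \<kappa> where k: "\<kappa> \<in> ?L" "\<Psi> (gg V E d c \<kappa>) < m + inverse (real (Suc n))" by auto
    obtain \<kappa>' where k': "\<kappa>' \<in> ?L" "\<forall>v w. \<bar>\<kappa>' v w\<bar> \<le> 1" "\<forall>v\<in>V. gg V E d c \<kappa>' v \<le> gg V E d c \<kappa> v"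
      using normalize[OF fin c k(1)] by blast
    have "\<Psi> (gg V E d c \<kappa>') \<le> \<Psi> (gg V E d c \<kappa>)"
      using k'(3) gg_nonneg[OF c] by (intro mono) auto
    then show ?thesis using k k' by force
  qed
  then obtain K where K: "\<And>n. K n \<in> ?L" "\<And>n v w. \<bar>K n v w\<bar> \<le> 1"
      "\<And>n. \<Psi> (gg V E d c (K n)) < m + inverse (real (Suc n))"
    by metis
  obtain r where r: "strict_mono r" "\<forall>i\<in>V \<times> V. convergent (\<lambda>n. (\<lambda>n (v, w). K n v w) (r n) i)"
    using BW_finite[where I="V \<times> V" and X="\<lambda>n (v, w). K n v w" and B=1] fin K(2) by auto
  define \<kappa>0 where "\<kappa>0 v w = (if v \<in> V \<and> w \<in> V then lim (\<lambda>n. K (r n) v w) else 0)" for v w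
  have conv: "(\<lambda>n. K (r n) v w) \<longlonglongrightarrow> \<kappa>0 v w" if "v \<in> V" "w \<in> V" for v w
    using r(2) that by (auto simp: \<kappa>0_def convergent_LIMSEQ_iff)
  have "\<kappa>0 \<in> ?L"
  proof -
    have "(\<Sum>v\<in>ancestors V E w. \<kappa>0 v w) = 1" if w: "w \<in> V" for w
    proof -
      have "(\<lambda>n. \<Sum>v\<in>ancestors V E w. K (r n) v w) \<longlonglongrightarrow> (\<Sum>v\<in>ancestors V E w. \<kappa>0 v w)"
        using anc_sub[of V E w] w by (intro tendsto_sum conv) auto
      moreover have "(\<lambda>n. \<Sum>v\<in>ancestors V E w. K (r n) v w) = (\<lambda>n. 1)"
        using K(1) w by (auto simp: Lset_def)
      ultimately show ?thesis using LIMSEQ_unique tendsto_const by metis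
    qed
    then show ?thesis by (auto simp: Lset_def \<kappa>0_def)
  qed
  moreover have "\<Psi> (gg V E d c \<kappa>0) \<le> m"
  proof (rule lsc)
    show "\<forall>v\<in>V. (\<lambda>n. gg V E d c (K (r n)) v) \<longlonglongrightarrow> gg V E d c \<kappa>0 v"
      unfolding gg_def
      by (intro ballI tendsto_mult tendsto_const tendsto_sum tendsto_power conv)
        (use desc_sub[of V E] in auto)
    show "\<forall>n. \<Psi> (gg V E d c (K (r n))) \<le> m + inverse (real (Suc (r n)))"
      using K(3) less_imp_le by blast
    have "(\<lambda>n. m + inverse (real (Suc n))) \<longlonglongrightarrow> m + 0"
      by (intro tendsto_add tendsto_const LIMSEQ_inverse_real_of_nat)
    from LIMSEQ_subseq_LIMSEQ[OF this r(1)]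
    show "(\<lambda>n. m + inverse (real (Suc (r n)))) \<longlonglongrightarrow> m" by (simp add: o_def)
  qed
  moreover have "m \<le> \<Psi> (gg V E d c \<kappa>)" if "\<kappa> \<in> ?L" for \<kappa>
    unfolding m_def using that bdd by (intro cInf_lower) auto
  ultimately show ?thesis by (meson order_trans)
qed

lemma deriv_sq_aux:
  fixes k dl cw :: real
  shows "((\<lambda>t. (k + t * dl)\<^sup>2 * cw) has_real_derivative 2 * k * dl * cw) (at 0)"
  by (auto intro!: derivative_eq_intros)

lemma deriv_sumpow_aux:
  fixes g :: "real \<Rightarrow> 'a \<Rightarrow> real"
  assumes "\<And>x. x \<in> A \<Longrightarrow> ((\<lambda>t. g t x) has_real_derivative g' x) (at 0)"
  shows "((\<lambda>t. \<Sum>x\<in>A. (g t x) ^ Suc q) has_real_derivative (\<Sum>x\<in>A. real (Suc q) * (g 0 x) ^ q * g' x)) (at 0)"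
proof -
  have "((\<lambda>t. \<Sum>x\<in>A. (g t x) ^ Suc q) has_real_derivative (\<Sum>x\<in>A. (1 + of_nat q) * (g' x * (g 0 x) ^ q))) (at 0)"
    by (rule DERIV_sum) (rule DERIV_power_Suc, erule assms)
  moreover have "(\<Sum>x\<in>A. (1 + of_nat q) * (g' x * (g 0 x) ^ q)) = (\<Sum>x\<in>A. real (Suc q) * (g 0 x) ^ q * g' x)"
    by (intro sum.cong) (simp_all add: algebra_simps)
  ultimately show ?thesis by simp
qed

lemma deriv_gg_aux:
  "((\<lambda>t. gg V E d c (\<lambda>a b. \<kappa> a b + t * \<delta> a b) x) has_real_derivative
      1 / (d x)\<^sup>2 * (\<Sum>w'\<in>descendants V E x. 2 * \<kappa> x w' * \<delta> x w' * c w')) (at 0)"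
  unfolding gg_def by (intro DERIV_cmult DERIV_sum deriv_sq_aux)

lemma exchange:
  assumes fin: "finite V" and dpos: "\<forall>v\<in>V. 0 < d v" and k: "\<kappa> \<in> Lset V E"
    and min: "\<forall>\<kappa>'\<in>Lset V E. (\<Sum>x\<in>V. (gg V E d c \<kappa> x) ^ Suc q) \<le> (\<Sum>x\<in>V. (gg V E d c \<kappa>' x) ^ Suc q)"
    and w: "w \<in> V" and u: "u \<in> ancestors V E w" and v: "v \<in> ancestors V E w"
  shows "(gg V E d c \<kappa> v) ^ q * \<kappa> v w * c w / (d v)\<^sup>2 = (gg V E d c \<kappa> u) ^ q * \<kappa> u w * c w / (d u)\<^sup>2"
proof (cases "u = v")
  case True then show ?thesis by simp
next
  case False
  have uV: "u \<in> V" using anc_sub[of V E w] u by (rule subsetD)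
  have vV: "v \<in> V" using anc_sub[of V E w] v by (rule subsetD)
  define \<delta> where "\<delta> a b = (if a = v \<and> b = w then 1 else 0) - (if a = u \<and> b = w then 1 else (0::real))" for a b
  define kt where "kt t = (\<lambda>a b. \<kappa> a b + t * \<delta> a b)" for t
  have ktL: "kt t \<in> Lset V E" for t
  proof -
    have "(\<Sum>a\<in>ancestors V E w'. kt t a w') = 1" if w': "w' \<in> V" for w'
    proof -
      have "(\<Sum>a\<in>ancestors V E w'. kt t a w') = (\<Sum>a\<in>ancestors V E w'. \<kappa> a w') + t * (\<Sum>a\<in>ancestors V E w'. \<delta> a w')"
        by (simp add: kt_def sum.distrib sum_distrib_left)
      also have "(\<Sum>a\<in>ancestors V E w'. \<delta> a w') = 0"
      proof (cases "w' = w")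
        case True
        then show ?thesis using u v fin_anc[OF fin] by (simp add: \<delta>_def sum_subtractf sum.delta)
      qed (simp add: \<delta>_def)
      finally show ?thesis using k w' by (simp add: Lset_def)
    qed
    moreover have "\<forall>a b. (a \<notin> V \<or> b \<notin> V) \<longrightarrow> kt t a b = 0"
      using k uV vV w by (auto simp: Lset_def kt_def \<delta>_def)
    ultimately show ?thesis by (simp add: Lset_def)
  qed
  define f where "f t = (\<Sum>x\<in>V. (gg V E d c (kt t) x) ^ Suc q)" for t
  have f0: "f 0 = (\<Sum>x\<in>V. (gg V E d c \<kappa> x) ^ Suc q)" by (simp add: f_def kt_def)
  define D where "D = (\<Sum>x\<in>V. real (Suc q) * (gg V E d c \<kappa> x) ^ q *
        (1 / (d x)\<^sup>2 * (\<Sum>w'\<in>descendants V E x. 2 * \<kappa> x w' * \<delta> x w' * c w')))"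
  have fD: "(f has_real_derivative D) (at 0)"
  proof -
    have "(f has_real_derivative (\<Sum>x\<in>V. real (Suc q) * (gg V E d c (kt 0) x) ^ q *
        (1 / (d x)\<^sup>2 * (\<Sum>w'\<in>descendants V E x. 2 * \<kappa> x w' * \<delta> x w' * c w')))) (at 0)"
      unfolding f_def kt_def by (intro deriv_sumpow_aux deriv_gg_aux)
    moreover have "kt 0 = \<kappa>" by (simp add: kt_def)
    ultimately show ?thesis by (simp add: D_def)
  qed
  have D0: "D = 0"
  proof -
    have "\<forall>y. \<bar>0 - y\<bar> < 1 \<longrightarrow> f 0 \<le> f y"
    proof (intro allI impI)
      fix y :: real
      have "f 0 \<le> (\<Sum>x\<in>V. (gg V E d c (kt y) x) ^ Suc q)"
        unfolding f0 using min ktL[of y] by blast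
      then show "f 0 \<le> f y" by (simp add: f_def)
    qed
    then show ?thesis by (rule DERIV_local_min[OF fD zero_less_one])
  qed
  have inner: "(\<Sum>w'\<in>descendants V E x. 2 * \<kappa> x w' * \<delta> x w' * c w') =
      (if x = v then 2 * \<kappa> v w * c w else 0) - (if x = u then 2 * \<kappa> u w * c w else 0)" if x: "x \<in> V" for x
  proof -
    have "(\<Sum>w'\<in>descendants V E x. 2 * \<kappa> x w' * \<delta> x w' * c w') =
      (\<Sum>w'\<in>descendants V E x. (if x = v \<and> w' = w then 2 * \<kappa> x w' * c w' else 0)
          - (if x = u \<and> w' = w then 2 * \<kappa> x w' * c w' else 0))"
      by (intro sum.cong refl) (auto simp: \<delta>_def)
    also have "\<dots> = (\<Sum>w'\<in>descendants V E x. (if x = v \<and> w' = w then 2 * \<kappa> x w' * c w' else 0))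
          - (\<Sum>w'\<in>descendants V E x. (if x = u \<and> w' = w then 2 * \<kappa> x w' * c w' else 0))"
      by (rule sum_subtractf)
    also have "(\<Sum>w'\<in>descendants V E x. (if x = v \<and> w' = w then 2 * \<kappa> x w' * c w' else 0))
        = (if x = v then 2 * \<kappa> v w * c w else 0)"
      using anc_desc[OF vV w, of E] v fin_desc[OF fin, of E x] by (cases "x = v") (auto simp: sum.delta')
    also have "(\<Sum>w'\<in>descendants V E x. (if x = u \<and> w' = w then 2 * \<kappa> x w' * c w' else 0))
        = (if x = u then 2 * \<kappa> u w * c w else 0)"
      using anc_desc[OF uV w, of E] u fin_desc[OF fin, of E x] by (cases "x = u") (auto simp: sum.delta')
    finally show ?thesis .
  qed
  define a where "a = real (Suc q) * (gg V E d c \<kappa> v) ^ q * (1 / (d v)\<^sup>2 * (2 * \<kappa> v w * c w))"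
  define b where "b = real (Suc q) * (gg V E d c \<kappa> u) ^ q * (1 / (d u)\<^sup>2 * (2 * \<kappa> u w * c w))"
  have "D = (\<Sum>x\<in>V. (if x = v then a else 0) - (if x = u then b else 0))"
    unfolding D_def using False by (intro sum.cong refl) (auto simp: inner a_def b_def)
  also have "\<dots> = a - b" using uV vV fin by (simp add: sum_subtractf sum.delta)
  finally have "a = b" using D0 by simp
  moreover have "a = (2 * real (Suc q)) * ((gg V E d c \<kappa> v) ^ q * \<kappa> v w * c w / (d v)\<^sup>2)"
    by (simp add: a_def mult_ac)
  moreover have "b = (2 * real (Suc q)) * ((gg V E d c \<kappa> u) ^ q * \<kappa> u w * c w / (d u)\<^sup>2)"
    by (simp add: b_def mult_ac)
  ultimately have "(2 * real (Suc q)) * ((gg V E d c \<kappa> v) ^ q * \<kappa> v w * c w / (d v)\<^sup>2)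
     = (2 * real (Suc q)) * ((gg V E d c \<kappa> u) ^ q * \<kappa> u w * c w / (d u)\<^sup>2)" by metis
  then show ?thesis by (subst (asm) mult_cancel_left) simp
qed

lemma multipliers:
  assumes fin: "finite V" and dpos: "\<forall>v\<in>V. 0 < d v" and k: "\<kappa> \<in> Lset V E"
    and eta: "\<forall>v\<in>V. 0 \<le> \<eta> v"
    and eq: "\<And>w u v. w \<in> V \<Longrightarrow> u \<in> ancestors V E w \<Longrightarrow> v \<in> ancestors V E w \<Longrightarrow>
               \<eta> v * \<kappa> v w * c w = \<eta> u * \<kappa> u w * c w"
  shows "dualc V E c \<eta> = lin V E d c \<kappa> \<eta>"
proof -
  have col: "c w * (\<Sum>v\<in>ancestors V E w. \<eta> v * (\<kappa> v w)\<^sup>2) = zeta V E \<eta> w * c w" if w: "w \<in> V" for w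
  proof -
    let ?A = "ancestors V E w"
    have wA: "w \<in> ?A" using self_anc[OF w] .
    have finA: "finite ?A" by (rule fin_anc[OF fin])
    have s1: "(\<Sum>v\<in>?A. \<kappa> v w) = 1" using k w by (simp add: Lset_def)
    define m where "m = \<eta> w * \<kappa> w w * c w"
    have em: "\<eta> v * \<kappa> v w * c w = m" if "v \<in> ?A" for v
      unfolding m_def by (rule eq[OF w wA that])
    have "c w * (\<Sum>v\<in>?A. \<eta> v * (\<kappa> v w)\<^sup>2) = (\<Sum>v\<in>?A. \<kappa> v w * (\<eta> v * \<kappa> v w * c w))"
      unfolding sum_distrib_left by (intro sum.cong refl) (simp add: power2_eq_square mult_ac)
    also have "\<dots> = (\<Sum>v\<in>?A. \<kappa> v w * m)"
      by (intro sum.cong refl) (simp add: em)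
    also have "\<dots> = (\<Sum>v\<in>?A. \<kappa> v w) * m" by (rule sum_distrib_right[symmetric])
    also have "\<dots> = m" using s1 by simp
    finally have lhs: "c w * (\<Sum>v\<in>?A. \<eta> v * (\<kappa> v w)\<^sup>2) = m" .
    have "zeta V E \<eta> w * c w = m"
    proof (cases "c w = 0")
      case True
      then show ?thesis by (simp add: m_def)
    next
      case cne: False
      define r where "r = m / c w"
      have er: "\<eta> v * \<kappa> v w = r" if "v \<in> ?A" for v
        using em[OF that] cne by (simp add: r_def eq_divide_eq)
      show ?thesis
      proof (cases "\<exists>v\<in>?A. \<eta> v = 0")
        case True
        then obtain v where v: "v \<in> ?A" "\<eta> v = 0" by blast
        then have "r = 0" using er[OF v(1)] by simp
        then have "m = 0" using cne by (simp add: r_def)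
        moreover have "zeta V E \<eta> w = 0" unfolding zeta_def using True by (rule if_P)
        ultimately show ?thesis by simp
      next
        case False
        have nz: "\<eta> v \<noteq> 0" if "v \<in> ?A" for v using False that by auto
        have kv: "\<kappa> v w = r * (1 / \<eta> v)" if "v \<in> ?A" for v
          using er[OF that] nz[OF that] by (simp add: eq_divide_eq mult.commute)
        define S where "S = (\<Sum>v\<in>?A. 1 / \<eta> v)"
        have "(\<Sum>v\<in>?A. \<kappa> v w) = (\<Sum>v\<in>?A. r * (1 / \<eta> v))" by (rule sum.cong[OF refl kv])
        then have "1 = (\<Sum>v\<in>?A. r * (1 / \<eta> v))" using s1 by simp
        also have "\<dots> = r * S" unfolding S_def by (simp only: sum_distrib_left)
        finally have rS: "r * S = 1" by simp
        have "zeta V E \<eta> w = 1 / S" unfolding zeta_def S_def using False by (rule if_not_P)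
        also have "\<dots> = r"
        proof -
          have Sne: "S \<noteq> 0" using rS by auto
          show ?thesis using rS Sne by (simp add: divide_eq_eq mult.commute)
        qed
        finally show ?thesis using cne by (simp add: r_def)
      qed
    qed
    with lhs show ?thesis by simp
  qed
  show ?thesis unfolding lin_swap[OF fin dpos] dualc_def
    by (intro sum.cong refl) (simp add: col)
qed

lemma ratio_bound:
  fixes G :: "'v \<Rightarrow> real"
  assumes fin: "finite V" and G0: "\<forall>v\<in>V. 0 \<le> G v" and th: "0 < \<theta>" "\<theta> < P"
    and Sdef: "S = (\<Sum>v\<in>V. (G v) ^ q)" and SP: "P ^ q \<le> S"
  shows "\<theta> - real (card V) * \<theta> * (\<theta> / P) ^ q \<le> (\<Sum>v\<in>V. (G v) ^ Suc q) / S"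
proof -
  have Ppos: "0 < P" using th by simp
  have Spos: "0 < S" using SP Ppos by (meson less_le_trans zero_less_power)
  have each: "(G v) ^ q * \<theta> \<le> (G v) ^ Suc q + \<theta> ^ Suc q" if "v \<in> V" for v
  proof (cases "\<theta> \<le> G v")
    case True
    then have a: "(G v) ^ q * \<theta> \<le> (G v) ^ q * G v" using G0 that by (intro mult_left_mono) auto
    have b: "(G v) ^ Suc q = (G v) ^ q * G v" by (rule power_Suc2)
    have c: "0 \<le> \<theta> ^ Suc q" using th by simp
    show ?thesis using a b c by linarith
  next
    case False
    then have "(G v) ^ q \<le> \<theta> ^ q" using G0 that by (intro power_mono) auto
    then have "(G v) ^ q * \<theta> \<le> \<theta> ^ q * \<theta>" using th by (intro mult_right_mono) auto
    moreover have "0 \<le> (G v) ^ Suc q" using G0 that by simp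
    moreover have "\<theta> ^ Suc q = \<theta> ^ q * \<theta>" by (rule power_Suc2)
    ultimately show ?thesis by linarith
  qed
  have "S * \<theta> = (\<Sum>v\<in>V. (G v) ^ q * \<theta>)" by (simp add: Sdef sum_distrib_right)
  also have "\<dots> \<le> (\<Sum>v\<in>V. (G v) ^ Suc q + \<theta> ^ Suc q)" by (intro sum_mono each)
  also have "\<dots> = (\<Sum>v\<in>V. (G v) ^ Suc q) + real (card V) * \<theta> ^ Suc q" by (simp add: sum.distrib)
  finally have A: "S * \<theta> \<le> (\<Sum>v\<in>V. (G v) ^ Suc q) + real (card V) * \<theta> ^ Suc q" .
  have B: "real (card V) * \<theta> ^ Suc q / S \<le> real (card V) * \<theta> * (\<theta> / P) ^ q"
  proof -
    have "0 < S * P ^ q" using Spos Ppos by simp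
    then have "real (card V) * \<theta> ^ Suc q / S \<le> real (card V) * \<theta> ^ Suc q / P ^ q"
      using SP th by (intro divide_left_mono) auto
    also have "\<dots> = real (card V) * \<theta> * (\<theta> / P) ^ q" by (simp add: power_divide)
    finally show ?thesis .
  qed
  have "(S * \<theta> - real (card V) * \<theta> ^ Suc q) / S \<le> (\<Sum>v\<in>V. (G v) ^ Suc q) / S"
    using A Spos by (intro divide_right_mono) auto
  moreover have "(S * \<theta> - real (card V) * \<theta> ^ Suc q) / S = \<theta> - real (card V) * \<theta> ^ Suc q / S"
    using Spos by (simp add: diff_divide_distrib)
  ultimately have "\<theta> - real (card V) * \<theta> ^ Suc q / S \<le> (\<Sum>v\<in>V. (G v) ^ Suc q) / S" by simp
  then show ?thesis using B by linarith
qed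

lemma max_mono_aux:
  assumes "finite V" "V \<noteq> {}" "\<forall>v\<in>V. x v \<le> y v"
  shows "Max (x ` V) \<le> Max (y ` V)"
proof -
  have "Max (x ` V) \<in> x ` V" by (rule Max_in) (use assms(1,2) in auto)
  then obtain v where v: "v \<in> V" "Max (x ` V) = x v" by auto
  have "y v \<le> Max (y ` V)" using assms(1) v(1) by (intro Max_ge) auto
  then show ?thesis using v assms(3) by force
qed

lemma max_lsc_aux:
  fixes X :: "nat \<Rightarrow> 'v \<Rightarrow> real"
  assumes "finite V" "V \<noteq> {}" "\<forall>v\<in>V. (\<lambda>n. X n v) \<longlonglongrightarrow> x v"
    "\<forall>n. Max (X n ` V) \<le> b n" "b \<longlonglongrightarrow> m"
  shows "Max (x ` V) \<le> m"
proof -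
  have "Max (x ` V) \<in> x ` V" by (rule Max_in) (use assms(1,2) in auto)
  then obtain v where v: "v \<in> V" "Max (x ` V) = x v" by auto
  have "X n v \<le> b n" for n
  proof -
    have "X n v \<le> Max (X n ` V)" using assms(1) v(1) by (intro Max_ge) auto
    then show ?thesis using assms(4) by (meson order_trans)
  qed
  then have "x v \<le> m" using assms(3) v(1) assms(5) by (intro LIMSEQ_le[of "\<lambda>n. X n v" _ b]) auto
  then show ?thesis using v by simp
qed

lemma sum_pow_lsc_aux:
  fixes X :: "nat \<Rightarrow> 'v \<Rightarrow> real"
  assumes "\<forall>v\<in>V. (\<lambda>n. X n v) \<longlonglongrightarrow> x v"
    "\<forall>n. (\<Sum>v\<in>V. (X n v) ^ p) \<le> b n" "b \<longlonglongrightarrow> m"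
  shows "(\<Sum>v\<in>V. (x v) ^ p) \<le> m"
proof -
  have "(\<lambda>n. \<Sum>v\<in>V. (X n v) ^ p) \<longlonglongrightarrow> (\<Sum>v\<in>V. (x v) ^ p)"
    using assms(1) by (intro tendsto_sum tendsto_power) auto
  then show ?thesis using assms(2,3) by (intro LIMSEQ_le[of "\<lambda>n. \<Sum>v\<in>V. (X n v) ^ p" _ b]) auto
qed

theorem proposition7:
  fixes V :: "'v set" and E :: "('v \<times> 'v) set" and d :: "'v \<Rightarrow> real"
    and \<alpha> :: "real^'n" and K :: "'v \<Rightarrow> real^'n^'n"
  assumes "finite V" and "V \<noteq> {}"
    and "E \<subseteq> V \<times> V" and "acyclic E"
    and "\<forall>v\<in>V. 0 < d v"
    and "\<forall>w\<in>V. psd (K w)"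
  shows "\<exists>\<kappa>0\<in>Lset V E. \<exists>\<eta>0\<in>Hset V d.
           (\<forall>\<kappa>\<in>Lset V E. primal_obj V E d \<alpha> K \<kappa>0 \<le> primal_obj V E d \<alpha> K \<kappa>) \<and>
           (\<forall>\<eta>\<in>Hset V d. dual_obj V E \<alpha> K \<eta> \<le> dual_obj V E \<alpha> K \<eta>0) \<and>
           primal_obj V E d \<alpha> K \<kappa>0 = dual_obj V E \<alpha> K \<eta>0"
proof -
  note fin = assms(1) and Vne = assms(2) and dpos = assms(5)
  define c where "c w = \<alpha> \<bullet> (K w *v \<alpha>)" for w
  have c0: "\<forall>w\<in>V. 0 \<le> c w" using assms(6) by (simp add: c_def psd_def)
  have peq: "primal_obj V E d \<alpha> K \<kappa> = Max (gg V E d c \<kappa> ` V)" for \<kappa>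
    by (simp add: primal_obj_def gg_def c_def)
  have deq: "dual_obj V E \<alpha> K \<eta> = dualc V E c \<eta>" for \<eta>
    by (simp add: dual_obj_def dualc_def c_def)
  obtain \<kappa>0 where k0: "\<kappa>0 \<in> Lset V E" "\<forall>\<kappa>\<in>Lset V E. Max (gg V E d c \<kappa>0 ` V) \<le> Max (gg V E d c \<kappa> ` V)"
  proof -
    have "\<exists>\<kappa>0\<in>Lset V E. \<forall>\<kappa>\<in>Lset V E. (\<lambda>x. Max (x ` V)) (gg V E d c \<kappa>0) \<le> (\<lambda>x. Max (x ` V)) (gg V E d c \<kappa>)"
    proof (rule exists_min[OF fin dpos c0])
      fix x y :: "'v \<Rightarrow> real" assume "\<forall>v\<in>V. 0 \<le> x v \<and> x v \<le> y v"
      then show "Max (x ` V) \<le> Max (y ` V)" by (intro max_mono_aux[OF fin Vne]) auto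
    next
      fix X x and b :: "nat \<Rightarrow> real" and m
      assume "\<forall>v\<in>V. (\<lambda>n. X n v) \<longlonglongrightarrow> x v" "\<forall>n. Max (X n ` V) \<le> b n" "b \<longlonglongrightarrow> m"
      then show "Max (x ` V) \<le> m" by (rule max_lsc_aux[OF fin Vne])
    qed
    then show ?thesis using that by auto
  qed
  define P where "P = Max (gg V E d c \<kappa>0 ` V)"
  have P0: "0 \<le> P"
  proof -
    have "Max (gg V E d c \<kappa>0 ` V) \<in> gg V E d c \<kappa>0 ` V" by (rule Max_in) (use fin Vne in auto)
    then obtain v where "v \<in> V" "P = gg V E d c \<kappa>0 v" unfolding P_def by auto
    then show ?thesis using gg_nonneg[OF c0] by simp
  qed
  have up: "dualc V E c \<eta> \<le> P" if "\<eta> \<in> Hset V d" for \<eta>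
    using weak_core[OF fin dpos c0 k0(1) that] lin_le_max[OF fin Vne c0 that, of E \<kappa>0]
    unfolding P_def by linarith
  obtain \<eta>0 where h0: "\<eta>0 \<in> Hset V d" "P \<le> dualc V E c \<eta>0"
  proof (cases "P = 0")
    case True
    have "(\<lambda>_. 0) \<in> Hset V d" by (simp add: Hset_def)
    moreover have "0 \<le> dualc V E c (\<lambda>_. 0)"
      unfolding dualc_def using c0 zeta_nonneg[OF fin, of "\<lambda>_. 0"]
      by (intro sum_nonneg mult_nonneg_nonneg) auto
    ultimately show ?thesis using that True by auto
  next
    case False
    then have Ppos: "0 < P" using P0 by simp
    define \<Phi> where "\<Phi> n \<kappa> = (\<Sum>x\<in>V. (gg V E d c \<kappa> x) ^ Suc (Suc n))" for n \<kappa>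
    have "\<exists>\<kappa>\<in>Lset V E. \<forall>\<kappa>'\<in>Lset V E. \<Phi> n \<kappa> \<le> \<Phi> n \<kappa>'" for n
    proof -
      have "\<exists>\<kappa>\<in>Lset V E. \<forall>\<kappa>'\<in>Lset V E. (\<lambda>x. \<Sum>v\<in>V. (x v) ^ Suc (Suc n)) (gg V E d c \<kappa>)
              \<le> (\<lambda>x. \<Sum>v\<in>V. (x v) ^ Suc (Suc n)) (gg V E d c \<kappa>')"
      proof (rule exists_min[OF fin dpos c0])
        fix x y :: "'v \<Rightarrow> real" assume xy: "\<forall>v\<in>V. 0 \<le> x v \<and> x v \<le> y v"
        show "(\<Sum>v\<in>V. (x v) ^ Suc (Suc n)) \<le> (\<Sum>v\<in>V. (y v) ^ Suc (Suc n))"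
          by (intro sum_mono power_mono) (use xy in auto)
      next
        fix X x and b :: "nat \<Rightarrow> real" and m
        assume "\<forall>v\<in>V. (\<lambda>n. X n v) \<longlonglongrightarrow> x v" "\<forall>na. (\<Sum>v\<in>V. (X na v) ^ Suc (Suc n)) \<le> b na" "b \<longlonglongrightarrow> m"
        then show "(\<Sum>v\<in>V. (x v) ^ Suc (Suc n)) \<le> m" by (rule sum_pow_lsc_aux)
      qed
      then show ?thesis by (simp add: \<Phi>_def)
    qed
    then obtain Kn where Kn: "\<And>n. Kn n \<in> Lset V E" "\<And>n \<kappa>'. \<kappa>' \<in> Lset V E \<Longrightarrow> \<Phi> n (Kn n) \<le> \<Phi> n \<kappa>'"
      by metis
    define G where "G n = gg V E d c (Kn n)" for n
    define S where "S n = (\<Sum>v\<in>V. (G n v) ^ Suc n)" for n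
    have G0: "0 \<le> G n v" for n v unfolding G_def by (rule gg_nonneg[OF c0])
    have SP: "P ^ Suc n \<le> S n" for n
    proof -
      have "Max (G n ` V) \<in> G n ` V" by (rule Max_in) (use fin Vne in auto)
      then obtain v where v: "v \<in> V" "Max (G n ` V) = G n v" by auto
      have "P \<le> G n v" using k0(2) Kn(1)[of n] v unfolding P_def G_def by auto
      then have "P ^ Suc n \<le> (G n v) ^ Suc n" using P0 by (intro power_mono) auto
      also have "\<dots> \<le> S n" unfolding S_def using fin v(1) G0 by (intro member_le_sum) auto
      finally show ?thesis .
    qed
    have Spos: "0 < S n" for n using SP[of n] Ppos by (meson less_le_trans zero_less_power)
    define \<eta> where "\<eta> n v = (if v \<in> V then (G n v) ^ Suc n / ((d v)\<^sup>2 * S n) else 0)" for n v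
    have \<eta>0: "0 \<le> \<eta> n v" for n v unfolding \<eta>_def using G0 Spos[of n] by simp
    have \<eta>sum: "(\<Sum>v\<in>V. (d v)\<^sup>2 * \<eta> n v) = 1" for n
    proof -
      have "(\<Sum>v\<in>V. (d v)\<^sup>2 * \<eta> n v) = (\<Sum>v\<in>V. (G n v) ^ Suc n / S n)"
      proof (intro sum.cong refl)
        fix x assume x: "x \<in> V"
        then have "d x \<noteq> 0" using dpos by auto
        then show "(d x)\<^sup>2 * \<eta> n x = (G n x) ^ Suc n / S n" using x by (simp add: \<eta>_def)
      qed
      also have "\<dots> = S n / S n" unfolding S_def by (rule sum_divide_distrib[symmetric])
      also have "\<dots> = 1" using Spos[of n] by simp
      finally show ?thesis .
    qed
    have \<eta>H: "\<eta> n \<in> Hset V d" for n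
      unfolding Hset_def mem_Collect_eq
    proof (intro conjI)
      show "\<forall>v. v \<notin> V \<longrightarrow> \<eta> n v = 0" by (simp add: \<eta>_def)
      show "\<forall>v\<in>V. 0 \<le> \<eta> n v" using \<eta>0 by simp
      show "(\<Sum>v\<in>V. (d v)\<^sup>2 * \<eta> n v) \<le> 1" using \<eta>sum[of n] by simp
    qed
    have dual_lin: "dualc V E c (\<eta> n) = lin V E d c (Kn n) (\<eta> n)" for n
    proof (rule multipliers[OF fin dpos Kn(1)])
      show "\<forall>v\<in>V. 0 \<le> \<eta> n v" using \<eta>0 by simp
    next
      fix w u v assume w: "w \<in> V" and u: "u \<in> ancestors V E w" and v: "v \<in> ancestors V E w"
      have uV: "u \<in> V" using anc_sub[of V E w] u by (rule subsetD)
      have vV: "v \<in> V" using anc_sub[of V E w] v by (rule subsetD)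
      have ex: "(G n v) ^ Suc n * Kn n v w * c w / (d v)\<^sup>2 = (G n u) ^ Suc n * Kn n u w * c w / (d u)\<^sup>2"
        unfolding G_def
        by (rule exchange[OF fin dpos Kn(1) _ w u v]) (use Kn(2) in \<open>auto simp: \<Phi>_def\<close>)
      have "\<eta> n v * Kn n v w * c w = ((G n v) ^ Suc n * Kn n v w * c w / (d v)\<^sup>2) / S n"
        using vV by (simp add: \<eta>_def)
      also have "\<dots> = ((G n u) ^ Suc n * Kn n u w * c w / (d u)\<^sup>2) / S n" using ex by simp
      also have "\<dots> = \<eta> n u * Kn n u w * c w" using uV by (simp add: \<eta>_def)
      finally show "\<eta> n v * Kn n v w * c w = \<eta> n u * Kn n u w * c w" .
    qed
    have lin_val: "lin V E d c (Kn n) (\<eta> n) = (\<Sum>v\<in>V. (G n v) ^ Suc (Suc n)) / S n" for n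
    proof -
      have "lin V E d c (Kn n) (\<eta> n) = (\<Sum>v\<in>V. (G n v) ^ Suc (Suc n) / S n)"
        unfolding lin_def
      proof (intro sum.cong refl)
        fix x assume x: "x \<in> V"
        then have "d x \<noteq> 0" using dpos by auto
        then show "\<eta> n x * (d x)\<^sup>2 * gg V E d c (Kn n) x = (G n x) ^ Suc (Suc n) / S n"
          using x by (simp add: \<eta>_def G_def power_Suc mult_ac)
      qed
      also have "\<dots> = (\<Sum>v\<in>V. (G n v) ^ Suc (Suc n)) / S n" by (rule sum_divide_distrib[symmetric])
      finally show ?thesis .
    qed
    have Rb: "\<theta> - real (card V) * \<theta> * (\<theta> / P) ^ Suc n \<le> dualc V E c (\<eta> n)" if "0 < \<theta>" "\<theta> < P" for \<theta> n
      unfolding dual_lin lin_val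
      using ratio_bound[OF fin _ that S_def[of n] SP[of n]] G0 by simp
    define B where "B = (\<Sum>u\<in>V. 1 / (d u)\<^sup>2)"
    have bnd: "\<bar>\<eta> n v\<bar> \<le> B" for n v
    proof (cases "v \<in> V")
      case True
      have "(d v)\<^sup>2 * \<eta> n v \<le> (\<Sum>u\<in>V. (d u)\<^sup>2 * \<eta> n u)"
        using fin True \<eta>0 by (intro member_le_sum) auto
      then have "(d v)\<^sup>2 * \<eta> n v \<le> 1" using \<eta>sum by simp
      moreover have "0 < (d v)\<^sup>2"
      proof -
        have "0 < d v" using dpos True by auto
        then show ?thesis by simp
      qed
      ultimately have "\<eta> n v \<le> 1 / (d v)\<^sup>2" by (simp add: le_divide_eq mult.commute)
      also have "\<dots> \<le> B" unfolding B_def using fin True by (intro member_le_sum) auto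
      finally show ?thesis using \<eta>0[of n v] by simp
    next
      case False
      have "0 \<le> B" unfolding B_def by (intro sum_nonneg) auto
      then show ?thesis using False by (simp add: \<eta>_def)
    qed
    obtain r where r: "strict_mono r" "\<forall>v\<in>V. convergent (\<lambda>m. \<eta> (r m) v)"
      using BW_finite[where I=V and X=\<eta> and B=B, OF fin bnd] by blast
    define \<eta>s where "\<eta>s v = (if v \<in> V then lim (\<lambda>m. \<eta> (r m) v) else 0)" for v
    have conv: "(\<lambda>m. \<eta> (r m) v) \<longlonglongrightarrow> \<eta>s v" if "v \<in> V" for v
      using r(2) that by (simp add: \<eta>s_def convergent_LIMSEQ_iff)
    have \<eta>sH: "\<eta>s \<in> Hset V d"
    proof -
      have nn: "0 \<le> \<eta>s v" if "v \<in> V" for v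
        using conv[OF that] \<eta>0 by (intro LIMSEQ_le_const[of "\<lambda>m. \<eta> (r m) v"]) auto
      have "(\<lambda>m. \<Sum>v\<in>V. (d v)\<^sup>2 * \<eta> (r m) v) \<longlonglongrightarrow> (\<Sum>v\<in>V. (d v)\<^sup>2 * \<eta>s v)"
        using conv by (intro tendsto_sum tendsto_mult tendsto_const) auto
      then have "(\<Sum>v\<in>V. (d v)\<^sup>2 * \<eta>s v) = 1"
        using \<eta>sum by (simp add: LIMSEQ_const_iff)
      then show ?thesis unfolding Hset_def mem_Collect_eq using nn by (auto simp: \<eta>s_def)
    qed
    have key: "P \<le> lin V E d c \<kappa> \<eta>s" if k: "\<kappa> \<in> Lset V E" for \<kappa>
    proof (rule dense_le_bounded[OF Ppos])
      fix \<theta> assume th: "0 < \<theta>" "\<theta> < P"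
      have l1: "(\<lambda>m. lin V E d c \<kappa> (\<eta> (r m))) \<longlonglongrightarrow> lin V E d c \<kappa> \<eta>s"
        unfolding lin_def using conv by (intro tendsto_sum tendsto_mult tendsto_const) auto
      have "(\<lambda>n. \<theta> - real (card V) * \<theta> * ((\<theta> / P) * (\<theta> / P) ^ n)) \<longlonglongrightarrow> \<theta> - real (card V) * \<theta> * ((\<theta> / P) * 0)"
        using th by (intro tendsto_intros LIMSEQ_power_zero) auto
      then have "(\<lambda>n. \<theta> - real (card V) * \<theta> * (\<theta> / P) ^ Suc n) \<longlonglongrightarrow> \<theta>" by simp
      from LIMSEQ_subseq_LIMSEQ[OF this r(1)]
      have l2: "(\<lambda>m. \<theta> - real (card V) * \<theta> * (\<theta> / P) ^ Suc (r m)) \<longlonglongrightarrow> \<theta>" by (simp add: o_def)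
      have "\<theta> - real (card V) * \<theta> * (\<theta> / P) ^ Suc (r m) \<le> lin V E d c \<kappa> (\<eta> (r m))" for m
        using Rb[OF th, of "r m"] weak_core[OF fin dpos c0 k \<eta>H[of "r m"]] by linarith
      then show "\<theta> \<le> lin V E d c \<kappa> \<eta>s" using l1 l2 by (intro LIMSEQ_le[OF l2 l1]) auto
    qed
    obtain \<kappa>s where "\<kappa>s \<in> Lset V E" "lin V E d c \<kappa>s \<eta>s = dualc V E c \<eta>s"
      using explicit[OF fin dpos \<eta>sH] by blast
    then have "P \<le> dualc V E c \<eta>s" using key by metis
    then show ?thesis using that \<eta>sH by blast
  qed
  have eq: "dualc V E c \<eta>0 = P" using up[OF h0(1)] h0(2) by simp
  have A: "\<forall>\<kappa>\<in>Lset V E. primal_obj V E d \<alpha> K \<kappa>0 \<le> primal_obj V E d \<alpha> K \<kappa>"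
    unfolding peq by (rule k0(2))
  have B: "\<forall>\<eta>\<in>Hset V d. dual_obj V E \<alpha> K \<eta> \<le> dual_obj V E \<alpha> K \<eta>0"
    unfolding deq eq using up by blast
  have C: "primal_obj V E d \<alpha> K \<kappa>0 = dual_obj V E \<alpha> K \<eta>0"
    unfolding peq deq eq by (simp add: P_def)
  show ?thesis using k0(1) h0(1) A B C by blast
qed

end
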